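(* Let $H$ be a separable infinite-dimensional complex Hilbert space. Let $x_1,\dots,x_n\in H$ be vectors of norm $1$, let $R>1$, let $T\in L(H)$ with $\|T\|\le R$, let $x\in H\setminus\{0\}$, $z\in H$ and $\epsilon>0$. Then there exists a finite rank operator $S\in L(H)$ with $\|S\|\le R$ such that $\|(S-T)x_j\|<\epsilon$ for all $j=1,\dots,n$ and $z=S^Nx$ for some natural number $N$ depending only on $R,\epsilon,\|x\|,\|z\|$.
   Context: $L(H)$ denotes the bounded linear operators on $H$. *)

theory Defs
  imports "HOL-Analysis.Analysis"
begin

class complex_hilbert_space = banach +
  fixes scaleC :: "complex \<Rightarrow> 'a \<Rightarrow> 'a"
    and cinner :: "'a \<Rightarrow> 'a \<Rightarrow> complex"
  assumes scaleC_add_right: "scaleC a (x + y) = scaleC a x + scaleC a y"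
    and scaleC_add_left: "scaleC (a + b) x = scaleC a x + scaleC b x"
    and scaleC_scaleC: "scaleC a (scaleC b x) = scaleC (a * b) x"
    and scaleC_one: "scaleC 1 x = x"
    and scaleR_scaleC: "scaleR r x = scaleC (complex_of_real r) x"
    and cinner_commute: "cinner x y = cnj (cinner y x)"
    and cinner_add_right: "cinner x (y + z) = cinner x y + cinner x z"
    and cinner_scaleC_right: "cinner x (scaleC a y) = a * cinner x y"
    and cinner_self_norm: "cinner x x = complex_of_real ((norm x)\<^sup>2)"

definition cspan :: "'a::complex_hilbert_space set \<Rightarrow> 'a set" where
  "cspan B = {\<Sum>b\<in>F. scaleC (c b) b | F c. finite F \<and> F \<subseteq> B}"

definition separable_space :: "'a::topological_space itself \<Rightarrow> bool" where
  "separable_space _ \<longleftrightarrow> (\<exists>D::'a set. countable D \<and> closure D = UNIV)"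

definition infinite_dimensional :: "'a::complex_hilbert_space itself \<Rightarrow> bool" where
  "infinite_dimensional _ \<longleftrightarrow> \<not> (\<exists>B::'a set. finite B \<and> cspan B = UNIV)"

definition bounded_clinear_op :: "('a::complex_hilbert_space \<Rightarrow> 'a) \<Rightarrow> bool" where
  "bounded_clinear_op f \<longleftrightarrow>
     (\<forall>x y. f (x + y) = f x + f y) \<and> (\<forall>a x. f (scaleC a x) = scaleC a (f x)) \<and>
     (\<exists>K. \<forall>x. norm (f x) \<le> norm x * K)"

definition finite_rank :: "('a::complex_hilbert_space \<Rightarrow> 'a) \<Rightarrow> bool" where
  "finite_rank f \<longleftrightarrow> (\<exists>B. finite B \<and> range f \<subseteq> cspan B)"

end

theory Submission
  imports Defs
begin

context complex_hilbert_space begin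

lemma scaleC_zero_left[simp]: "scaleC 0 x = 0"
proof -
  have "scaleC 0 x = scaleC 0 x + scaleC 0 x" using scaleC_add_left[of 0 0 x] by simp
  thus ?thesis by simp
qed

lemma scaleC_zero_right[simp]: "scaleC a 0 = 0"
proof -
  have "scaleC a 0 = scaleC a 0 + scaleC a 0" using scaleC_add_right[of a 0 0] by simp
  thus ?thesis by simp
qed

lemma scaleC_minus_right: "scaleC a (- x) = - scaleC a x"
proof -
  have "scaleC a x + scaleC a (-x) = 0" using scaleC_add_right[of a x "-x"] by simp
  from add.inverse_unique[OF this] show ?thesis by simp
qed

lemma scaleC_diff_right: "scaleC a (x - y) = scaleC a x - scaleC a y"
  using scaleC_add_right[of a x "-y"] by (simp add: scaleC_minus_right)

lemma scaleC_minus_left: "scaleC (- a) x = - scaleC a x"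
proof -
  have "scaleC a x + scaleC (-a) x = 0" using scaleC_add_left[of a "-a" x] by simp
  from add.inverse_unique[OF this] show ?thesis by simp
qed

lemma scaleC_diff_left: "scaleC (a - b) x = scaleC a x - scaleC b x"
  using scaleC_add_left[of a "-b" x] by (simp add: scaleC_minus_left)

lemma scaleC_sum_right: "scaleC a (sum f A) = (\<Sum>i\<in>A. scaleC a (f i))"
  by (induction A rule: infinite_finite_induct) (auto simp: scaleC_add_right)

lemma scaleC_sum_left: "scaleC (sum f A) x = (\<Sum>i\<in>A. scaleC (f i) x)"
  by (induction A rule: infinite_finite_induct) (auto simp: scaleC_add_left)

lemma cinner_zero_right[simp]: "cinner x 0 = 0"
  using cinner_add_right[of x 0 0] by simp

lemma cinner_minus_right: "cinner x (- y) = - cinner x y"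
proof -
  have "cinner x y + cinner x (-y) = 0" using cinner_add_right[of x y "-y"] by simp
  have "cinner x (-y) = (cinner x y + cinner x (-y)) - cinner x y" by simp
  also have "\<dots> = - cinner x y" using \<open>cinner x y + cinner x (-y) = 0\<close> by simp
  finally show ?thesis .
qed

lemma cinner_diff_right: "cinner x (y - z) = cinner x y - cinner x z"
  using cinner_add_right[of x y "-z"] by (simp add: cinner_minus_right)

lemma cinner_sum_right: "cinner x (sum f A) = (\<Sum>i\<in>A. cinner x (f i))"
  by (induction A rule: infinite_finite_induct) (auto simp: cinner_add_right)

lemma cinner_add_left: "cinner (x + y) z = cinner x z + cinner y z"
  by (metis cinner_commute cinner_add_right complex_cnj_add)

lemma cinner_scaleC_left: "cinner (scaleC a x) y = cnj a * cinner x y"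
  by (metis cinner_commute cinner_scaleC_right complex_cnj_mult)

lemma cinner_zero_left[simp]: "cinner 0 x = 0"
  by (metis cinner_commute cinner_zero_right complex_cnj_zero)

lemma cinner_diff_left: "cinner (x - y) z = cinner x z - cinner y z"
  by (metis cinner_commute cinner_diff_right complex_cnj_diff)

lemma cinner_sum_left: "cinner (sum f A) x = (\<Sum>i\<in>A. cinner (f i) x)"
  by (induction A rule: infinite_finite_induct) (auto simp: cinner_add_left)

lemma cinner_self_sq: "cinner x x = (complex_of_real (norm x))\<^sup>2"
  by (simp add: cinner_self_norm)

lemma norm_scaleC: "norm (scaleC a x) = cmod a * norm x"
proof -
  have "complex_of_real ((norm (scaleC a x))\<^sup>2) = cinner (scaleC a x) (scaleC a x)"
    by (simp add: cinner_self_norm)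
  also have "\<dots> = (cnj a * a) * cinner x x"
    by (simp add: cinner_scaleC_left cinner_scaleC_right)
  also have "cnj a * a = complex_of_real ((cmod a)\<^sup>2)" using complex_norm_square[of a] by (simp add: mult.commute)
  also have "cinner x x = complex_of_real ((norm x)\<^sup>2)" by (rule cinner_self_norm)
  finally have "(norm (scaleC a x))\<^sup>2 = (cmod a * norm x)\<^sup>2"
    by (metis of_real_eq_iff of_real_mult power_mult_distrib)
  thus ?thesis by (simp add: power2_eq_iff_nonneg)
qed

lemma cinner_self_Re: "Re (cinner x x) = (norm x)\<^sup>2"
  by (simp add: cinner_self_norm)

lemma norm_add_sq: "(norm (x + y))\<^sup>2 = (norm x)\<^sup>2 + (norm y)\<^sup>2 + 2 * Re (cinner x y)"
proof -
  have "cinner (x+y) (x+y) = cinner x x + cinner y y + (cinner x y + cinner y x)"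
    by (simp add: cinner_add_left cinner_add_right algebra_simps)
  hence "Re (cinner (x+y) (x+y)) = Re (cinner x x) + Re (cinner y y) + Re (cinner x y + cinner y x)"
    by simp
  also have "Re (cinner x y + cinner y x) = 2 * Re (cinner x y)"
    by (subst cinner_commute[of y x]) simp
  finally show ?thesis by (simp add: cinner_self_Re)
qed

lemma norm_diff_sq: "(norm (x - y))\<^sup>2 = (norm x)\<^sup>2 + (norm y)\<^sup>2 - 2 * Re (cinner x y)"
  using norm_add_sq[of x "-y"] by (simp add: cinner_minus_right)

lemma norm_add_sq_orth: "cinner x y = 0 \<Longrightarrow> (norm (x + y))\<^sup>2 = (norm x)\<^sup>2 + (norm y)\<^sup>2"
  by (simp add: norm_add_sq)

lemma cauchy_schwarz: "cmod (cinner x y) \<le> norm x * norm y"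
proof (cases "y = 0")
  case True thus ?thesis by simp
next
  case False
  hence ny: "norm y > 0" by simp
  define a where "a = cinner y x / complex_of_real ((norm y)\<^sup>2)"
  have cc: "cnj (cinner x y) * cinner x y = (complex_of_real (cmod (cinner x y)))\<^sup>2"
    using complex_norm_square[of "cinner x y"] by (simp add: mult.commute)
  have e1: "a * cinner x y = complex_of_real ((cmod (cinner x y))\<^sup>2 / (norm y)\<^sup>2)"
    unfolding a_def cinner_commute[of y x]
    by (simp add: cc)
  have e2: "cmod a = cmod (cinner x y) / (norm y)\<^sup>2"
    unfolding a_def cinner_commute[of y x] by (simp add: norm_divide norm_power)
  have "0 \<le> (norm (x - scaleC a y))\<^sup>2" by simp
  also have "\<dots> = (norm x)\<^sup>2 + (cmod a * norm y)\<^sup>2 - 2 * Re (a * cinner x y)"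
    by (simp add: norm_diff_sq norm_scaleC cinner_scaleC_right)
  also have "\<dots> = (norm x)\<^sup>2 - (cmod (cinner x y))\<^sup>2 / (norm y)\<^sup>2"
    unfolding e1 e2 using ny by (simp add: field_simps power2_eq_square)
  finally have "(cmod (cinner x y))\<^sup>2 \<le> (norm x * norm y)\<^sup>2"
    using ny by (simp add: field_simps power_mult_distrib)
  thus ?thesis using power2_le_imp_le by (simp add: mult_nonneg_nonneg)
qed

end


lemma cinner_zero_sym: "cinner (a::'a::complex_hilbert_space) b = 0 \<longleftrightarrow> cinner b a = 0"
  by (metis cinner_commute complex_cnj_zero_iff)

lemma cnj_mult_self: "cnj z * z = complex_of_real ((cmod z)\<^sup>2)"
  using complex_norm_square[of z] by (simp add: mult.commute)

definition orthonormal :: "(nat \<Rightarrow> 'a::complex_hilbert_space) \<Rightarrow> nat \<Rightarrow> bool" where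
  "orthonormal e m \<longleftrightarrow> (\<forall>i<m. \<forall>j<m. cinner (e i) (e j) = (if i = j then 1 else 0))"

definition lincomb :: "(nat \<Rightarrow> 'a::complex_hilbert_space) \<Rightarrow> nat \<Rightarrow> (nat \<Rightarrow> complex) \<Rightarrow> 'a" where
  "lincomb e m a = (\<Sum>i<m. scaleC (a i) (e i))"

definition proj :: "(nat \<Rightarrow> 'a::complex_hilbert_space) \<Rightarrow> nat \<Rightarrow> 'a \<Rightarrow> 'a" where
  "proj e m y = lincomb e m (\<lambda>i. cinner (e i) y)"

lemma cinner_lincomb_right: "cinner v (lincomb e m a) = (\<Sum>i<m. a i * cinner v (e i))"
  by (simp add: lincomb_def cinner_sum_right cinner_scaleC_right)

lemma cinner_lincomb_left: "cinner (lincomb e m a) v = (\<Sum>i<m. cnj (a i) * cinner (e i) v)"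
  by (simp add: lincomb_def cinner_sum_left cinner_scaleC_left)

lemma orthonormal_norm: "orthonormal e m \<Longrightarrow> i < m \<Longrightarrow> norm (e i) = 1"
proof -
  assume "orthonormal e m" "i < m"
  hence "cinner (e i) (e i) = 1" by (simp add: orthonormal_def)
  hence "complex_of_real ((norm (e i))\<^sup>2) = 1" by (simp add: cinner_self_norm)
  hence "(norm (e i))\<^sup>2 = 1" by (metis of_real_eq_1_iff)
  thus ?thesis by (smt (verit) norm_ge_zero power2_eq_1_iff)
qed

lemma orthonormal_coeff:
  assumes "orthonormal e m" "j < m"
  shows "cinner (e j) (lincomb e m a) = a j"
proof -
  have "cinner (e j) (lincomb e m a) = (\<Sum>i<m. a i * (if j = i then 1 else 0))"
    unfolding cinner_lincomb_right using assms by (intro sum.cong) (auto simp: orthonormal_def)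
  also have "\<dots> = (\<Sum>i<m. if i = j then a i else 0)" by (intro sum.cong) auto
  also have "\<dots> = a j" using assms(2) by simp
  finally show ?thesis .
qed

lemma orthonormal_norm_lincomb:
  assumes "orthonormal e m"
  shows "(norm (lincomb e m a))\<^sup>2 = (\<Sum>i<m. (cmod (a i))\<^sup>2)"
proof -
  have "cinner (lincomb e m a) (lincomb e m a) = (\<Sum>i<m. cnj (a i) * a i)"
    unfolding cinner_lincomb_left using assms by (intro sum.cong) (auto simp: orthonormal_coeff)
  also have "\<dots> = (\<Sum>i<m. complex_of_real ((cmod (a i))\<^sup>2))"
    by (intro sum.cong refl) (rule cnj_mult_self)
  finally have "Re (cinner (lincomb e m a) (lincomb e m a)) = (\<Sum>i<m. (cmod (a i))\<^sup>2)"
    by (simp add: Re_sum)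
  thus ?thesis by (simp add: cinner_self_Re)
qed

lemma orth_lincomb_right: "(\<And>i. i < m \<Longrightarrow> cinner v (e i) = 0) \<Longrightarrow> cinner v (lincomb e m a) = 0"
  by (simp add: cinner_lincomb_right)

lemma orth_lincomb_left: "(\<And>i. i < m \<Longrightarrow> cinner (e i) v = 0) \<Longrightarrow> cinner (lincomb e m a) v = 0"
  by (simp add: cinner_lincomb_left)

lemma proj_residual_orth:
  assumes "orthonormal e m" "j < m"
  shows "cinner (e j) (y - proj e m y) = 0"
  using assms by (simp add: cinner_diff_right proj_def orthonormal_coeff)

lemma bessel_eq:
  assumes "orthonormal e m"
  shows "(norm y)\<^sup>2 = (norm (y - proj e m y))\<^sup>2 + (\<Sum>i<m. (cmod (cinner (e i) y))\<^sup>2)"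
proof -
  have o: "cinner (y - proj e m y) (proj e m y) = 0"
    unfolding proj_def
    by (rule orth_lincomb_right) (metis assms cinner_zero_sym proj_def proj_residual_orth)
  have "(norm y)\<^sup>2 = (norm ((y - proj e m y) + proj e m y))\<^sup>2" by simp
  also have "\<dots> = (norm (y - proj e m y))\<^sup>2 + (norm (proj e m y))\<^sup>2"
    by (rule norm_add_sq_orth[OF o])
  finally show ?thesis unfolding proj_def using orthonormal_norm_lincomb[OF assms] by simp
qed

lemma bessel:
  assumes "orthonormal e m"
  shows "(\<Sum>i<m. (cmod (cinner (e i) y))\<^sup>2) \<le> (norm y)\<^sup>2"
  using bessel_eq[OF assms, of y] by simp

lemma norm_proj_sq:
  assumes "orthonormal e m"
  shows "(norm (proj e m y))\<^sup>2 = (\<Sum>i<m. (cmod (cinner (e i) y))\<^sup>2)"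
  unfolding proj_def using orthonormal_norm_lincomb[OF assms] by simp

lemma lincomb_Suc: "lincomb e (Suc m) a = lincomb e m a + scaleC (a m) (e m)"
  by (simp add: lincomb_def)

lemma lincomb_cong: "(\<And>i. i < m \<Longrightarrow> e i = e' i) \<Longrightarrow> (\<And>i. i < m \<Longrightarrow> a i = a' i) \<Longrightarrow>
   lincomb e m a = lincomb e' m a'"
  by (simp add: lincomb_def)

lemma gram_schmidt:
  fixes vs :: "nat \<Rightarrow> 'a::complex_hilbert_space"
  shows "\<exists>e m. orthonormal e m \<and> (\<forall>j<n. proj e m (vs j) = vs j)"
proof (induction n)
  case 0
  show ?case by (rule exI[of _ "\<lambda>_. 0"], rule exI[of _ 0]) (simp add: orthonormal_def)
next
  case (Suc n)
  then obtain e m where on: "orthonormal e m" and fx: "\<forall>j<n. proj e m (vs j) = vs j" by blast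
  define v where "v = vs n"
  define r where "r = v - proj e m v"
  show ?case
  proof (cases "r = 0")
    case True
    hence "proj e m v = v" unfolding r_def by simp
    thus ?thesis using on fx unfolding v_def by (metis less_Suc_eq)
  next
    case False
    hence nr: "norm r > 0" by simp
    define f where "f = scaleC (complex_of_real (1 / norm r)) r"
    define e' where "e' = e(m := f)"
    have ef: "\<And>i. i < m \<Longrightarrow> cinner (e i) f = 0"
      unfolding f_def r_def by (simp add: cinner_scaleC_right proj_residual_orth[OF on])
    hence fe: "\<And>i. i < m \<Longrightarrow> cinner f (e i) = 0" using cinner_zero_sym by blast
    have nf: "norm f = 1" unfolding f_def using nr by (simp add: norm_scaleC norm_divide)
    hence ff: "cinner f f = 1" by (simp add: cinner_self_norm)
    have on': "orthonormal e' (Suc m)"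
      unfolding orthonormal_def e'_def using on ef fe ff
      by (auto simp: orthonormal_def less_Suc_eq)
    have pe': "proj e' (Suc m) w = proj e m w + scaleC (cinner f w) f" for w
    proof -
      have "proj e' (Suc m) w = lincomb e' m (\<lambda>i. cinner (e' i) w) + scaleC (cinner f w) f"
        unfolding proj_def lincomb_Suc by (simp add: e'_def)
      also have "lincomb e' m (\<lambda>i. cinner (e' i) w) = proj e m w"
        unfolding proj_def by (rule lincomb_cong) (auto simp: e'_def)
      finally show ?thesis .
    qed
    have old: "proj e' (Suc m) (vs j) = vs j" if "j < n" for j
    proof -
      have "cinner f (vs j) = cinner f (proj e m (vs j))" using fx that by simp
      also have "\<dots> = 0" unfolding proj_def by (rule orth_lincomb_right) (simp add: fe)
      finally show ?thesis using pe' fx that by simp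
    qed
    have rP: "cinner r (proj e m v) = 0"
      unfolding proj_def by (rule orth_lincomb_right)
        (metis cinner_zero_sym on proj_residual_orth r_def)
    have "cinner r v = cinner r (r + proj e m v)" unfolding r_def by simp
    also have "\<dots> = complex_of_real ((norm r)\<^sup>2)" by (simp add: cinner_add_right rP cinner_self_norm)
    finally have rv: "cinner r v = complex_of_real ((norm r)\<^sup>2)" .
    have "scaleC (cinner f v) f = r"
      unfolding f_def using nr
      by (simp add: cinner_scaleC_left rv scaleC_scaleC power2_eq_square scaleC_one)
    hence new: "proj e' (Suc m) v = v" using pe' unfolding r_def by simp
    show ?thesis
      by (rule exI[of _ e'], rule exI[of _ "Suc m"]) (metis on' old new v_def less_Suc_eq)
  qed
qed



lemma cspan_zero: "0 \<in> cspan B"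
  unfolding cspan_def by (rule CollectI, rule exI[of _ "{}"]) auto

lemma cspan_base: "b \<in> B \<Longrightarrow> b \<in> cspan B"
  unfolding cspan_def
  by (rule CollectI, rule exI[of _ "{b}"], rule exI[of _ "\<lambda>_. 1"]) (auto simp: scaleC_one)

lemma cspan_add_aux:
  assumes "finite F1" "F1 \<subseteq> B" "finite F2" "F2 \<subseteq> B"
  shows "(\<Sum>b\<in>F1. scaleC (c1 b) b) + (\<Sum>b\<in>F2. scaleC (c2 b) b) \<in> cspan B"
proof -
  define c where "c b = (if b \<in> F1 then c1 b else 0) + (if b \<in> F2 then c2 b else 0)" for b
  have s1: "(\<Sum>b\<in>F1 \<union> F2. scaleC (if b \<in> F1 then c1 b else 0) b) = (\<Sum>b\<in>F1. scaleC (c1 b) b)"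
  proof -
    have "(\<Sum>b\<in>F1 \<union> F2. scaleC (if b \<in> F1 then c1 b else 0) b) = (\<Sum>b\<in>F1. scaleC (if b \<in> F1 then c1 b else 0) b)"
      by (rule sum.mono_neutral_right) (use assms in auto)
    also have "\<dots> = (\<Sum>b\<in>F1. scaleC (c1 b) b)" by (rule sum.cong) auto
    finally show ?thesis .
  qed
  have s2: "(\<Sum>b\<in>F1 \<union> F2. scaleC (if b \<in> F2 then c2 b else 0) b) = (\<Sum>b\<in>F2. scaleC (c2 b) b)"
  proof -
    have "(\<Sum>b\<in>F1 \<union> F2. scaleC (if b \<in> F2 then c2 b else 0) b) = (\<Sum>b\<in>F2. scaleC (if b \<in> F2 then c2 b else 0) b)"
      by (rule sum.mono_neutral_right) (use assms in auto)
    also have "\<dots> = (\<Sum>b\<in>F2. scaleC (c2 b) b)" by (rule sum.cong) auto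
    finally show ?thesis .
  qed
  have "(\<Sum>b\<in>F1 \<union> F2. scaleC (c b) b) = (\<Sum>b\<in>F1. scaleC (c1 b) b) + (\<Sum>b\<in>F2. scaleC (c2 b) b)"
    unfolding c_def scaleC_add_left sum.distrib s1 s2 ..
  moreover have "(\<Sum>b\<in>F1 \<union> F2. scaleC (c b) b) \<in> cspan B"
    unfolding cspan_def using assms by blast
  ultimately show ?thesis by simp
qed

lemma cspan_add: "x \<in> cspan B \<Longrightarrow> y \<in> cspan B \<Longrightarrow> x + y \<in> cspan B"
proof -
  assume "x \<in> cspan B" "y \<in> cspan B"
  then obtain F1 c1 F2 c2 where "x = (\<Sum>b\<in>F1. scaleC (c1 b) b)" "finite F1" "F1 \<subseteq> B"
    "y = (\<Sum>b\<in>F2. scaleC (c2 b) b)" "finite F2" "F2 \<subseteq> B"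
    unfolding cspan_def by blast
  thus ?thesis using cspan_add_aux by blast
qed

lemma cspan_scale: "x \<in> cspan B \<Longrightarrow> scaleC a x \<in> cspan B"
proof -
  assume "x \<in> cspan B"
  then obtain F c where "x = (\<Sum>b\<in>F. scaleC (c b) b)" "finite F" "F \<subseteq> B"
    unfolding cspan_def by blast
  moreover have "scaleC a (\<Sum>b\<in>F. scaleC (c b) b) = (\<Sum>b\<in>F. scaleC (a * c b) b)"
    by (simp add: scaleC_sum_right scaleC_scaleC)
  ultimately have "scaleC a x = (\<Sum>b\<in>F. scaleC (a * c b) b)" "finite F" "F \<subseteq> B" by simp_all
  thus ?thesis unfolding cspan_def
    by (intro CollectI exI[of _ F] exI[of _ "\<lambda>b. a * c b"]) simp
qed

lemma cspan_lincomb: "(\<And>i. i < m \<Longrightarrow> e i \<in> B) \<Longrightarrow> lincomb e m a \<in> cspan B"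
proof (induction m)
  case 0 thus ?case by (simp add: lincomb_def cspan_zero)
next
  case (Suc m) thus ?case by (simp add: lincomb_Suc cspan_add cspan_scale cspan_base)
qed

lemma fresh_vector:
  fixes vs :: "nat \<Rightarrow> 'a::complex_hilbert_space"
  assumes "infinite_dimensional TYPE('a)"
  shows "\<exists>f. norm f = 1 \<and> (\<forall>j<n. cinner f (vs j) = 0)"
proof -
  obtain e m where on: "orthonormal e m" and fx: "\<forall>j<n. proj e m (vs j) = vs j"
    using gram_schmidt by blast
  have "cspan (e ` {..<m}) \<noteq> UNIV" using assms unfolding infinite_dimensional_def by blast
  then obtain v where v: "v \<notin> cspan (e ` {..<m})" by blast
  define r where "r = v - proj e m v"
  have "r \<noteq> 0"
  proof
    assume "r = 0"
    hence "v = proj e m v" unfolding r_def by simp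
    moreover have "proj e m v \<in> cspan (e ` {..<m})" unfolding proj_def by (rule cspan_lincomb) auto
    ultimately show False using v by simp
  qed
  hence nr: "norm r > 0" by simp
  define f where "f = scaleC (complex_of_real (1 / norm r)) r"
  have nf: "norm f = 1" unfolding f_def using nr by (simp add: norm_scaleC norm_divide)
  have fe: "\<And>i. i < m \<Longrightarrow> cinner f (e i) = 0"
    unfolding f_def r_def
    by (metis cinner_scaleC_left cinner_zero_sym mult_zero_right on proj_residual_orth)
  have "cinner f (vs j) = 0" if "j < n" for j
  proof -
    have "cinner f (vs j) = cinner f (proj e m (vs j))" using fx that by simp
    also have "\<dots> = 0" unfolding proj_def by (rule orth_lincomb_right) (simp add: fe)
    finally show ?thesis .
  qed
  thus ?thesis using nf by blast
qed

lemma fresh_orthonormal: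
  fixes vs :: "nat \<Rightarrow> 'a::complex_hilbert_space"
  assumes "infinite_dimensional TYPE('a)"
  shows "\<exists>g. orthonormal g k \<and> (\<forall>i<k. \<forall>j<n. cinner (g i) (vs j) = 0)"
proof (induction k)
  case 0 thus ?case by (simp add: orthonormal_def)
next
  case (Suc k)
  then obtain g where on: "orthonormal g k" and og: "\<forall>i<k. \<forall>j<n. cinner (g i) (vs j) = 0" by blast
  define ws where "ws j = (if j < n then vs j else g (j - n))" for j
  obtain f where nf: "norm f = 1" and fw: "\<forall>j<n + k. cinner f (ws j) = 0"
    using fresh_vector[OF assms] by blast
  have fv: "\<And>j. j < n \<Longrightarrow> cinner f (vs j) = 0"
  proof -
    fix j assume "j < n"
    hence "cinner f (ws j) = 0" using fw by simp
    thus "cinner f (vs j) = 0" using \<open>j < n\<close> unfolding ws_def by simp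
  qed
  have fg: "\<And>i. i < k \<Longrightarrow> cinner f (g i) = 0"
  proof -
    fix i assume "i < k"
    hence "cinner f (ws (n + i)) = 0" using fw by simp
    thus "cinner f (g i) = 0" unfolding ws_def by simp
  qed
  hence gf: "\<And>i. i < k \<Longrightarrow> cinner (g i) f = 0" using cinner_zero_sym by blast
  have ff: "cinner f f = 1" using nf by (simp add: cinner_self_norm)
  have "orthonormal (g(k := f)) (Suc k)"
    using on fg gf ff unfolding orthonormal_def by (auto simp: less_Suc_eq)
  moreover have "\<forall>i<Suc k. \<forall>j<n. cinner ((g(k := f)) i) (vs j) = 0"
    using og fv by (auto simp: less_Suc_eq)
  ultimately show ?case by blast
qed



definition rop :: "(nat \<Rightarrow> 'a::complex_hilbert_space) \<Rightarrow> (nat \<Rightarrow> 'a) \<Rightarrow> nat \<Rightarrow> 'a \<Rightarrow> 'a" where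
  "rop A B m y = (\<Sum>i<m. scaleC (cinner (A i) y) (B i))"

lemma rop_bclin: "bounded_clinear_op (rop A B m)"
  unfolding bounded_clinear_op_def
proof (intro conjI allI)
  fix x y
  show "rop A B m (x + y) = rop A B m x + rop A B m y"
    by (simp add: rop_def cinner_add_right scaleC_add_left sum.distrib)
next
  fix a x
  show "rop A B m (scaleC a x) = scaleC a (rop A B m x)"
    by (simp add: rop_def cinner_scaleC_right scaleC_sum_right scaleC_scaleC)
next
  show "\<exists>K. \<forall>x. norm (rop A B m x) \<le> norm x * K"
  proof (intro exI allI)
    fix x
    have "norm (rop A B m x) \<le> (\<Sum>i<m. norm (scaleC (cinner (A i) x) (B i)))"
      unfolding rop_def by (rule norm_sum)
    also have "\<dots> \<le> (\<Sum>i<m. norm x * (norm (A i) * norm (B i)))"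
    proof (rule sum_mono)
      fix i
      have "cmod (cinner (A i) x) * norm (B i) \<le> (norm (A i) * norm x) * norm (B i)"
        by (rule mult_right_mono[OF cauchy_schwarz norm_ge_zero])
      thus "norm (scaleC (cinner (A i) x) (B i)) \<le> norm x * (norm (A i) * norm (B i))"
        by (simp add: norm_scaleC algebra_simps)
    qed
    also have "\<dots> = norm x * (\<Sum>i<m. norm (A i) * norm (B i))" by (simp add: sum_distrib_left)
    finally show "norm (rop A B m x) \<le> norm x * (\<Sum>i<m. norm (A i) * norm (B i))" .
  qed
qed

lemma bclin_add: "bounded_clinear_op f \<Longrightarrow> bounded_clinear_op g \<Longrightarrow> bounded_clinear_op (\<lambda>y. f y + g y)"
  unfolding bounded_clinear_op_def
proof (elim conjE exE, intro conjI allI)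
  fix K1 K2
  assume f1: "\<forall>x y. f (x + y) = f x + f y" and f2: "\<forall>a x. f (scaleC a x) = scaleC a (f x)"
    and fb: "\<forall>x. norm (f x) \<le> norm x * K1"
    and g1: "\<forall>x y. g (x + y) = g x + g y" and g2: "\<forall>a x. g (scaleC a x) = scaleC a (g x)"
    and gb: "\<forall>x. norm (g x) \<le> norm x * K2"
  fix x y a
  show "f (x + y) + g (x + y) = f x + g x + (f y + g y)" using f1 g1 by (simp add: algebra_simps)
  show "f (scaleC a x) + g (scaleC a x) = scaleC a (f x + g x)" using f2 g2 by (simp add: scaleC_add_right)
  show "\<exists>K. \<forall>x. norm (f x + g x) \<le> norm x * K"
  proof (intro exI allI)
    fix x
    have "norm (f x + g x) \<le> norm (f x) + norm (g x)" by (rule norm_triangle_ineq)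
    also have "\<dots> \<le> norm x * K1 + norm x * K2" using fb gb by (simp add: add_mono)
    finally show "norm (f x + g x) \<le> norm x * (K1 + K2)" by (simp add: algebra_simps)
  qed
qed

lemma cspan_mono: "B \<subseteq> B' \<Longrightarrow> cspan B \<subseteq> cspan B'"
  unfolding cspan_def by blast

lemma rop_range: "rop A B m y \<in> cspan (B ` {..<m})"
proof -
  have "rop A B m y = lincomb B m (\<lambda>i. cinner (A i) y)" by (simp add: rop_def lincomb_def)
  also have "\<dots> \<in> cspan (B ` {..<m})" by (rule cspan_lincomb) auto
  finally show ?thesis .
qed

lemma bclin_bounded_linear:
  fixes T :: "'a::complex_hilbert_space \<Rightarrow> 'a"
  assumes "bounded_clinear_op T"
  shows "bounded_linear T"
proof -
  from assms obtain K where t1: "\<And>x y. T (x + y) = T x + T y"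
    and t2: "\<And>a x. T (scaleC a x) = scaleC a (T x)" and tb: "\<And>x. norm (T x) \<le> norm x * K"
    unfolding bounded_clinear_op_def by blast
  show ?thesis
  proof (rule bounded_linear_intro[OF t1 _ tb])
    fix r x show "T (scaleR r x) = scaleR r (T x)" by (simp add: scaleR_scaleC t2)
  qed
qed

lemma bclin_onorm_bound:
  fixes T :: "'a::complex_hilbert_space \<Rightarrow> 'a"
  assumes "bounded_clinear_op T" "onorm T \<le> R"
  shows "norm (T y) \<le> R * norm y"
proof -
  have "norm (T y) \<le> onorm T * norm y" by (rule onorm[OF bclin_bounded_linear[OF assms(1)]])
  also have "\<dots> \<le> R * norm y" using assms(2) by (simp add: mult_right_mono)
  finally show ?thesis .
qed

lemma bclin_lincomb:
  fixes T :: "'a::complex_hilbert_space \<Rightarrow> 'a"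
  assumes "bounded_clinear_op T"
  shows "T (lincomb e m a) = lincomb (\<lambda>i. T (e i)) m a"
proof -
  from assms have t1: "\<And>x y. T (x + y) = T x + T y"
    and t2: "\<And>a x. T (scaleC a x) = scaleC a (T x)"
    unfolding bounded_clinear_op_def by blast+
  have t0: "T 0 = 0" using t1[of 0 0] by simp
  show ?thesis by (induction m) (simp_all add: lincomb_def t0 t1 t2)
qed



lemma cmod_cinner_commute: "cmod (cinner (a::'a::complex_hilbert_space) b) = cmod (cinner b a)"
  by (subst cinner_commute) simp

lemma cinner_cnj_mult: "cinner (b::'a::complex_hilbert_space) a * cinner a b = complex_of_real ((cmod (cinner a b))\<^sup>2)"
  by (subst cinner_commute[of b a]) (rule cnj_mult_self)

lemma adj_bound:
  fixes T :: "'a::complex_hilbert_space \<Rightarrow> 'a"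
  assumes T: "bounded_clinear_op T" and Tb: "\<And>y. norm (T y) \<le> R * norm y"
    and on: "orthonormal f m"
  shows "(\<Sum>i<m. (cmod (cinner v (T (f i))))\<^sup>2) \<le> (R * norm v)\<^sup>2"
proof -
  define s where "s = (\<Sum>i<m. (cmod (cinner v (T (f i))))\<^sup>2)"
  have s0: "s \<ge> 0" unfolding s_def by (simp add: sum_nonneg)
  define w where "w = lincomb f m (\<lambda>i. cinner (T (f i)) v)"
  have nw: "(norm w)\<^sup>2 = s"
    unfolding w_def s_def orthonormal_norm_lincomb[OF on]
    by (intro sum.cong refl) (simp add: cmod_cinner_commute)
  have "cinner v (T w) = (\<Sum>i<m. cinner (T (f i)) v * cinner v (T (f i)))"
    unfolding w_def bclin_lincomb[OF T] cinner_lincomb_right ..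
  also have "\<dots> = (\<Sum>i<m. complex_of_real ((cmod (cinner v (T (f i))))\<^sup>2))"
    by (intro sum.cong refl) (rule cinner_cnj_mult)
  finally have "cinner v (T w) = complex_of_real s" unfolding s_def by simp
  hence "s = cmod (cinner v (T w))" using s0 by simp
  also have "\<dots> \<le> norm v * norm (T w)" by (rule cauchy_schwarz)
  also have "\<dots> \<le> norm v * (R * norm w)" by (simp add: Tb mult_left_mono)
  finally have ss: "s \<le> R * norm v * sqrt s" using nw by (simp add: real_sqrt_unique algebra_simps)
  show ?thesis
  proof (cases "s = 0")
    case True thus ?thesis by (simp add: s_def[symmetric])
  next
    case False
    hence "sqrt s > 0" using s0 by simp
    have e: "sqrt s * sqrt s = s" using s0 by simp
    have "sqrt s * sqrt s \<le> (R * norm v) * sqrt s" using ss e by simp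
    hence "sqrt s \<le> R * norm v" using \<open>sqrt s > 0\<close> by (rule mult_right_le_imp_le)
    hence "(sqrt s)\<^sup>2 \<le> (R * norm v)\<^sup>2" using s0 by (intro power_mono) simp_all
    thus ?thesis using s0 by (simp add: s_def[symmetric])
  qed
qed

lemma exists_j:
  fixes \<rho> R K a b :: real
  assumes "0 < \<rho>" "\<rho> < 1" "R > 1" "K > 0" "a \<ge> 0" "b \<ge> 0"
  shows "\<exists>j. b + (\<rho> * R) ^ Suc (Suc j) * a \<le> K * R ^ j"
proof -
  have l1: "(\<lambda>j. \<rho> ^ j) \<longlonglongrightarrow> 0" using assms by (simp add: LIMSEQ_power_zero)
  have l2: "(\<lambda>j. inverse (R ^ j)) \<longlonglongrightarrow> 0" using assms by (simp add: LIMSEQ_inverse_realpow_zero)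
  have "R\<^sup>2 * a \<ge> 0" using assms by simp
  hence d: "2 * (R\<^sup>2 * a + 1) > 0" by (intro mult_pos_pos) (simp_all add: add_nonneg_pos)
  have pos: "K / (2 * (R\<^sup>2 * a + 1)) > 0" by (rule divide_pos_pos[OF assms(4) d])
  have "eventually (\<lambda>j. \<rho> ^ j < K / (2 * (R\<^sup>2 * a + 1))) sequentially"
    using order_tendstoD(2)[OF l1 pos] .
  moreover have "eventually (\<lambda>j. inverse (R ^ j) < K / (2 * (b + 1))) sequentially"
    using order_tendstoD(2)[OF l2] assms by simp
  ultimately have "eventually (\<lambda>j. \<rho> ^ j < K / (2 * (R\<^sup>2 * a + 1)) \<and> inverse (R ^ j) < K / (2 * (b + 1))) sequentially"
    by (rule eventually_conj)
  then obtain j where j1: "\<rho> ^ j < K / (2 * (R\<^sup>2 * a + 1))"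
    and j2: "inverse (R ^ j) < K / (2 * (b + 1))"
    unfolding eventually_sequentially by blast
  have Rj: "R ^ j > 0" using assms by simp
  have ra: "R\<^sup>2 * a + 1 > 0" using d by simp
  have "\<rho> ^ Suc (Suc j) \<le> \<rho> ^ j" using assms by (intro power_decreasing) simp_all
  hence "\<rho> ^ Suc (Suc j) * (R\<^sup>2 * a) \<le> \<rho> ^ j * (R\<^sup>2 * a + 1)"
    using assms by (intro mult_mono) simp_all
  also have "\<rho> ^ j * (R\<^sup>2 * a + 1) < K / 2"
    using j1 ra by (simp add: pos_less_divide_eq field_simps)
  finally have t1: "\<rho> ^ Suc (Suc j) * R\<^sup>2 * a \<le> K / 2" by (simp add: mult.assoc)
  have "1 < K / (2 * (b + 1)) * R ^ j" using j2 Rj by (simp add: field_simps)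
  hence "2 * (b + 1) < K * R ^ j" using assms by (simp add: field_simps)
  hence t2: "b \<le> K / 2 * R ^ j" by simp
  have "(\<rho> * R) ^ Suc (Suc j) * a = (\<rho> ^ Suc (Suc j) * R\<^sup>2 * a) * R ^ j"
    by (simp add: power_mult_distrib power2_eq_square algebra_simps)
  also have "\<dots> \<le> K / 2 * R ^ j" using t1 Rj by (simp add: mult_right_mono)
  finally show ?thesis using t2 by (intro exI[of _ j]) simp
qed

lemma final_ineq:
  fixes \<delta> R s \<beta> B X p :: real
  assumes "0 < \<delta>" "\<delta> \<le> 1/2" "R > 1" "s \<ge> 0" "\<beta> \<ge> 0" "B \<ge> 0" "p \<ge> 0"
    and "p \<le> (1 - \<delta>/2) * R * s + \<delta> * R / 4 * \<beta>"
    and "X \<le> p\<^sup>2 + (\<delta> * R / 4)\<^sup>2 * s\<^sup>2 + R\<^sup>2 * B"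
  shows "X \<le> R\<^sup>2 * (s\<^sup>2 + B + \<beta>\<^sup>2)"
proof -
  define P where "P = (1 - \<delta>/2) * R"
  define h where "h = \<delta> * R / 4"
  have P0: "P \<ge> 0" and h0: "h \<ge> 0" using assms by (simp_all add: P_def h_def)
  have "p\<^sup>2 \<le> (P * s + h * \<beta>)\<^sup>2" using assms by (simp add: P_def h_def power_mono)
  also have "\<dots> = P\<^sup>2 * s\<^sup>2 + 2 * (P * h) * (s * \<beta>) + h\<^sup>2 * \<beta>\<^sup>2" by (simp add: power2_eq_square algebra_simps)
  also have "2 * (P * h) * (s * \<beta>) \<le> (P * h) * (s\<^sup>2 + \<beta>\<^sup>2)"
  proof -
    have "0 \<le> (s - \<beta>)\<^sup>2" by simp
    hence "2 * (s * \<beta>) \<le> s\<^sup>2 + \<beta>\<^sup>2" by (simp add: power2_diff)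
    hence "(P * h) * (2 * (s * \<beta>)) \<le> (P * h) * (s\<^sup>2 + \<beta>\<^sup>2)"
      using P0 h0 by (intro mult_left_mono) simp_all
    thus ?thesis by (simp add: algebra_simps)
  qed
  finally have pp: "p\<^sup>2 \<le> (P\<^sup>2 + P * h) * s\<^sup>2 + (P * h + h\<^sup>2) * \<beta>\<^sup>2" by (simp add: algebra_simps)
  have c1: "P\<^sup>2 + P * h + h\<^sup>2 \<le> R\<^sup>2"
  proof -
    have "P\<^sup>2 + P * h + h\<^sup>2 = R\<^sup>2 * (1 - 3 * \<delta> / 4 + 3 * \<delta>\<^sup>2 / 16)"
      by (simp add: P_def h_def power2_eq_square algebra_simps)
    also have "\<dots> \<le> R\<^sup>2 * 1"
    proof (rule mult_left_mono)
      have "\<delta>\<^sup>2 \<le> \<delta>" using assms by (simp add: power2_eq_square mult_le_cancel_left1)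
      thus "1 - 3 * \<delta> / 4 + 3 * \<delta>\<^sup>2 / 16 \<le> 1" using assms by simp
    qed simp
    finally show ?thesis by simp
  qed
  have c2: "P * h + h\<^sup>2 \<le> R\<^sup>2" using c1 zero_le_power2[of P] by linarith
  have "X \<le> (P\<^sup>2 + P * h + h\<^sup>2) * s\<^sup>2 + (P * h + h\<^sup>2) * \<beta>\<^sup>2 + R\<^sup>2 * B"
    using assms(9) pp unfolding h_def[symmetric] by (simp add: algebra_simps)
  also have "\<dots> \<le> R\<^sup>2 * s\<^sup>2 + R\<^sup>2 * \<beta>\<^sup>2 + R\<^sup>2 * B"
    using c1 c2 assms(6) by (intro add_mono mult_right_mono) simp_all
  finally show ?thesis by (simp add: algebra_simps)
qed



lemma lincomb_split:
  "lincomb (\<lambda>i. scaleC \<alpha> (p i) + scaleC \<beta> (q i)) m c = scaleC \<alpha> (lincomb p m c) + scaleC \<beta> (lincomb q m c)"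
  by (simp add: lincomb_def scaleC_add_right scaleC_scaleC scaleC_sum_right sum.distrib mult.commute)

lemma rop_lincomb: "rop A B m y = lincomb B m (\<lambda>i. cinner (A i) y)"
  by (simp add: rop_def lincomb_def)

lemma rop_one: "rop A B 1 y = scaleC (cinner (A 0) y) (B 0)"
  by (simp add: rop_def)

definition dlt :: "real \<Rightarrow> real \<Rightarrow> real" where "dlt R \<epsilon> = min (1/2) (\<epsilon> / (4 * R))"
definition eta1 :: "real \<Rightarrow> real \<Rightarrow> real" where "eta1 R \<epsilon> = dlt R \<epsilon> * R / 2"
definition eta2 :: "real \<Rightarrow> real \<Rightarrow> real" where "eta2 R \<epsilon> = dlt R \<epsilon> * R / 4"
definition rho :: "real \<Rightarrow> real \<Rightarrow> real" where "rho R \<epsilon> = 1 - dlt R \<epsilon> / 2"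
definition UU :: "real \<Rightarrow> real \<Rightarrow> real" where "UU R \<epsilon> = sqrt (1 + 4 / (dlt R \<epsilon>)\<^sup>2)"
definition ccf :: "real \<Rightarrow> real \<Rightarrow> real" where "ccf R \<epsilon> = eta2 R \<epsilon> / UU R \<epsilon>"
definition jfun :: "real \<Rightarrow> real \<Rightarrow> real \<Rightarrow> real \<Rightarrow> nat" where
  "jfun R \<epsilon> a b = (LEAST j. b + (rho R \<epsilon> * R) ^ Suc (Suc j) * a \<le> eta2 R \<epsilon> * ccf R \<epsilon> * a * R ^ j)"
definition Nfun :: "real \<Rightarrow> real \<Rightarrow> real \<Rightarrow> real \<Rightarrow> nat" where
  "Nfun R \<epsilon> a b = Suc (Suc (jfun R \<epsilon> a b))"



lemma main_construction:
  fixes T :: "'a::complex_hilbert_space \<Rightarrow> 'a" and xs :: "nat \<Rightarrow> 'a"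
  assumes inf: "infinite_dimensional TYPE('a)"
    and xsn: "\<forall>j\<in>{1..n}. norm (xs j) = 1" and R1: "R > 1" and T: "bounded_clinear_op T"
    and TR: "onorm T \<le> R" and x0: "x \<noteq> 0" and ep: "\<epsilon> > 0"
  shows "\<exists>S. bounded_clinear_op S \<and> finite_rank S \<and> onorm S \<le> R \<and>
         (\<forall>j\<in>{1..n}. norm (S (xs j) - T (xs j)) < \<epsilon>) \<and>
         (S ^^ Nfun R \<epsilon> (norm x) (norm z)) x = z"
proof -
  define \<delta> where "\<delta> = dlt R \<epsilon>"
  define \<eta>1 where "\<eta>1 = eta1 R \<epsilon>"
  define \<eta>2 where "\<eta>2 = eta2 R \<epsilon>"
  define \<rho> where "\<rho> = rho R \<epsilon>"
  define U where "U = UU R \<epsilon>"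
  define c where "c = ccf R \<epsilon>"
  define a where "a = norm x"
  have a0: "a > 0" using x0 by (simp add: a_def)
  have d0: "\<delta> > 0" using ep R1 by (simp add: \<delta>_def dlt_def)
  have d1: "\<delta> \<le> 1/2" by (simp add: \<delta>_def dlt_def)
  have dR: "\<delta> * R \<le> \<epsilon> / 4"
  proof -
    have "\<delta> \<le> \<epsilon> / (4 * R)" by (simp add: \<delta>_def dlt_def)
    hence "\<delta> * R \<le> \<epsilon> / (4 * R) * R" using R1 by (intro mult_right_mono) simp_all
    also have "\<epsilon> / (4 * R) * R = \<epsilon> / 4" using R1 by simp
    finally show ?thesis .
  qed
  have e1: "\<eta>1 = \<delta> * R / 2" by (simp add: \<eta>1_def eta1_def \<delta>_def)
  have e2: "\<eta>2 = \<delta> * R / 4" by (simp add: \<eta>2_def eta2_def \<delta>_def)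
  have rh: "\<rho> = 1 - \<delta> / 2" by (simp add: \<rho>_def rho_def \<delta>_def)
  have U1: "U \<ge> 1" unfolding U_def UU_def \<delta>_def[symmetric] using d0 by simp
  have Ud: "U = sqrt (1 + 4 / \<delta>\<^sup>2)" by (simp add: U_def UU_def \<delta>_def)
  have cU: "c * U = \<eta>2" using U1 by (simp add: c_def ccf_def U_def \<eta>2_def)
  have c0: "c > 0" using U1 d0 R1 by (simp add: c_def ccf_def U_def[symmetric] \<eta>2_def[symmetric] e2)
  have \<eta>10: "\<eta>1 > 0" using d0 R1 by (simp add: e1)
  have \<eta>20: "\<eta>2 > 0" using d0 R1 by (simp add: e2)
  have Tb: "\<And>y. norm (T y) \<le> R * norm y" by (rule bclin_onorm_bound[OF T TR])
  from T have Tadd: "\<And>x y. T (x + y) = T x + T y" and Tsc: "\<And>a x. T (scaleC a x) = scaleC a (T x)"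
    unfolding bounded_clinear_op_def by blast+

  define j0 where "j0 = jfun R \<epsilon> a (norm z)"
  have ex: "\<exists>j. norm z + (\<rho> * R) ^ Suc (Suc j) * a \<le> \<eta>2 * c * a * R ^ j"
    by (rule exists_j) (use d0 d1 R1 c0 \<eta>20 a0 in \<open>simp_all add: rh\<close>)
  have Pj0: "norm z + (\<rho> * R) ^ Suc (Suc j0) * a \<le> \<eta>2 * c * a * R ^ j0"
    unfolding j0_def jfun_def \<rho>_def[symmetric] \<eta>2_def[symmetric] c_def[symmetric]
    by (rule LeastI_ex[OF ex])
  have Neq: "Nfun R \<epsilon> (norm x) (norm z) = Suc (Suc j0)"
    by (simp add: Nfun_def j0_def a_def)

  obtain f m where onf: "orthonormal f m" and fx0: "\<forall>j<n. proj f m (xs (Suc j)) = xs (Suc j)"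
    using gram_schmidt[where vs="\<lambda>j. xs (Suc j)" and n=n] by blast
  have fx: "proj f m (xs j) = xs j" if "j \<in> {1..n}" for j
  proof -
    from that obtain i where "j = Suc i" "i < n" by (cases j) auto
    thus ?thesis using fx0 by simp
  qed

  define ws where "ws l = (if l < m then T (f l) else x)" for l
  obtain g where ong: "orthonormal g m" and gw: "\<forall>i<m. \<forall>l<Suc m. cinner (g i) (ws l) = 0"
    using fresh_orthonormal[OF inf] by blast
  have gTf: "cinner (g i) (T (f l)) = 0" if "i < m" "l < m" for i l
  proof -
    have "cinner (g i) (ws l) = 0" using gw that by simp
    thus ?thesis using that by (simp add: ws_def)
  qed
  have gx: "cinner (g i) x = 0" if "i < m" for i
  proof -
    have "cinner (g i) (ws m) = 0" using gw that by simp
    thus ?thesis by (simp add: ws_def)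
  qed

  define t where "t i = scaleC (complex_of_real (1 - \<delta>)) (T (f i)) + scaleC (complex_of_real \<eta>1) (g i)" for i
  define S0 where "S0 = rop f t m"
  define xh where "xh = scaleC (complex_of_real (1 / a)) x"
  define r where "r = (1 - \<delta>) / \<eta>1"
  have rr: "complex_of_real (1 - \<delta>) = complex_of_real r * complex_of_real \<eta>1"
    using \<eta>10 by (simp add: r_def flip: of_real_mult)
  define \<beta> where "\<beta> i = - complex_of_real r * cinner (T (f i)) xh" for i
  define u where "u = xh + lincomb g m \<beta>"

  define ws2 where "ws2 l = (if l < m then f l else if l < 2 * m then g (l - m)
      else if l < 3 * m then T (f (l - 2 * m)) else if l = 3 * m then x else z)" for l
  obtain e where one: "orthonormal e (Suc j0)"
    and ew2: "\<forall>i<Suc j0. \<forall>l<3 * m + 2. cinner (e i) (ws2 l) = 0"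
    using fresh_orthonormal[OF inf] by blast
  have ef: "cinner (e i) (f l) = 0" if "i < Suc j0" "l < m" for i l
  proof -
    have "cinner (e i) (ws2 l) = 0" using ew2 that by simp
    thus ?thesis using that by (simp add: ws2_def)
  qed
  have eg: "cinner (e i) (g l) = 0" if "i < Suc j0" "l < m" for i l
  proof -
    have "cinner (e i) (ws2 (m + l)) = 0" using ew2 that by simp
    thus ?thesis using that by (simp add: ws2_def)
  qed
  have eTf: "cinner (e i) (T (f l)) = 0" if "i < Suc j0" "l < m" for i l
  proof -
    have "cinner (e i) (ws2 (2 * m + l)) = 0" using ew2 that by simp
    thus ?thesis using that by (simp add: ws2_def)
  qed
  have ex: "cinner (e i) x = 0" if "i < Suc j0" for i
  proof -
    have "cinner (e i) (ws2 (3 * m)) = 0" using ew2 that by simp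
    thus ?thesis by (simp add: ws2_def)
  qed
  have ez: "cinner (e i) z = 0" if "i < Suc j0" for i
  proof -
    have "cinner (e i) (ws2 (3 * m + 1)) = 0" using ew2 that by simp
    thus ?thesis by (simp add: ws2_def)
  qed

  have S0lc: "S0 y = lincomb t m (\<lambda>l. cinner (f l) y)" for y
    by (simp add: S0_def rop_lincomb)
  have et: "cinner (e i) (t l) = 0" if "i < Suc j0" "l < m" for i l
    using that by (simp add: t_def cinner_add_right cinner_scaleC_right eTf eg)
  have eS0: "cinner (e i) (S0 y) = 0" if "i < Suc j0" for i y
    unfolding S0lc by (rule orth_lincomb_right) (simp add: et that)
  have exh: "cinner (e i) xh = 0" if "i < Suc j0" for i
    using that by (simp add: xh_def cinner_scaleC_right ex)
  have eu: "cinner (e i) u = 0" if "i < Suc j0" for i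
    using that by (simp add: u_def cinner_add_right exh orth_lincomb_right eg)
  have ue: "cinner u (e i) = 0" if "i < Suc j0" for i
    using eu[OF that] cinner_zero_sym by blast

  have xhg: "cinner xh (g l) = 0" if "l < m" for l
    using gx[OF that] cinner_zero_sym[of "g l" x] by (simp add: xh_def cinner_scaleC_left)
  have ut: "cinner u (t l) = 0" if "l < m" for l
  proof -
    have "cinner (lincomb g m \<beta>) (t l) = (\<Sum>i<m. cnj (\<beta> i) * cinner (g i) (t l))"
      by (rule cinner_lincomb_left)
    also have "\<dots> = (\<Sum>i<m. if i = l then cnj (\<beta> l) * complex_of_real \<eta>1 else 0)"
      using ong that
      by (intro sum.cong refl) (auto simp: t_def cinner_add_right cinner_scaleC_right gTf orthonormal_def)
    also have "\<dots> = cnj (\<beta> l) * complex_of_real \<eta>1" using that by simp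
    also have "\<dots> = - complex_of_real (1 - \<delta>) * cinner xh (T (f l))"
      unfolding rr by (simp add: \<beta>_def cinner_commute[of "T (f l)" xh] mult_ac)
    finally have h1: "cinner (lincomb g m \<beta>) (t l) = - complex_of_real (1 - \<delta>) * cinner xh (T (f l))" .
    have h2: "cinner xh (t l) = complex_of_real (1 - \<delta>) * cinner xh (T (f l))"
      using that by (simp add: t_def cinner_add_right cinner_scaleC_right xhg)
    show ?thesis unfolding u_def cinner_add_left h1 h2 by (simp add: algebra_simps)
  qed
  have uS0: "cinner u (S0 y) = 0" for y
    unfolding S0lc by (rule orth_lincomb_right) (simp add: ut)
  have ux: "cinner u x = complex_of_real a"
  proof -
    have "cinner (lincomb g m \<beta>) x = 0" by (rule orth_lincomb_left) (simp add: gx)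
    moreover have "cinner xh x = complex_of_real a"
      using a0 by (simp add: xh_def cinner_scaleC_left cinner_self_norm a_def power2_eq_square)
    ultimately show ?thesis by (simp add: u_def cinner_add_left)
  qed
  have nu: "norm u \<le> U"
  proof -
    have nxh: "norm xh = 1" using a0 by (simp add: xh_def norm_scaleC a_def norm_divide)
    have o: "cinner xh (lincomb g m \<beta>) = 0" by (rule orth_lincomb_right) (simp add: xhg)
    have "(\<Sum>i<m. (cmod (\<beta> i))\<^sup>2) = r\<^sup>2 * (\<Sum>i<m. (cmod (cinner xh (T (f i))))\<^sup>2)"
      by (simp add: \<beta>_def norm_mult sum_distrib_left power_mult_distrib cmod_cinner_commute)
    also have "\<dots> \<le> r\<^sup>2 * (R * norm xh)\<^sup>2"
      by (intro mult_left_mono adj_bound[OF T Tb onf]) simp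
    also have "\<dots> \<le> 4 / \<delta>\<^sup>2"
    proof -
      have rR: "r * R = 2 * (1 - \<delta>) / \<delta>"
        using d0 R1 unfolding r_def e1 by (simp add: field_simps)
      have "2 * (1 - \<delta>) / \<delta> \<le> 2 / \<delta>"
        using d0 by (intro divide_right_mono) simp_all
      hence "r * R \<le> 2 / \<delta>" using rR by simp
      moreover have "0 \<le> r * R"
        unfolding rR using d0 d1 by (intro divide_nonneg_pos) simp_all
      ultimately have "(r * R)\<^sup>2 \<le> (2 / \<delta>)\<^sup>2" by (rule power_mono)
      thus ?thesis using nxh by (simp add: power_mult_distrib power_divide)
    qed
    finally have sb: "(\<Sum>i<m. (cmod (\<beta> i))\<^sup>2) \<le> 4 / \<delta>\<^sup>2" .
    have "(norm u)\<^sup>2 = (norm xh)\<^sup>2 + (norm (lincomb g m \<beta>))\<^sup>2"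
      unfolding u_def by (rule norm_add_sq_orth[OF o])
    also have "\<dots> = 1 + (\<Sum>i<m. (cmod (\<beta> i))\<^sup>2)" using nxh orthonormal_norm_lincomb[OF ong] by simp
    also have "\<dots> \<le> 1 + 4 / \<delta>\<^sup>2" using sb by simp
    also have "1 + 4 / \<delta>\<^sup>2 = U\<^sup>2"
      unfolding Ud by (rule real_sqrt_pow2[symmetric]) (simp add: add_nonneg_nonneg)
    finally have "(norm u)\<^sup>2 \<le> U\<^sup>2" .
    thus ?thesis by (rule power2_le_imp_le) (use U1 in simp)
  qed

  have S0dec: "S0 y = scaleC (complex_of_real (1 - \<delta>)) (T (proj f m y))
                 + scaleC (complex_of_real \<eta>1) (lincomb g m (\<lambda>l. cinner (f l) y))" for y
    unfolding S0lc t_def lincomb_split proj_def bclin_lincomb[OF T] ..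
  have nS0: "norm (S0 y) \<le> \<rho> * R * sqrt (\<Sum>l<m. (cmod (cinner (f l) y))\<^sup>2)" for y
  proof -
    define s where "s = sqrt (\<Sum>l<m. (cmod (cinner (f l) y))\<^sup>2)"
    have np: "norm (proj f m y) = s"
      unfolding s_def norm_proj_sq[OF onf, symmetric] by simp
    have ng: "norm (lincomb g m (\<lambda>l. cinner (f l) y)) = s"
      unfolding s_def orthonormal_norm_lincomb[OF ong, symmetric] by simp
    have "norm (S0 y) \<le> norm (scaleC (complex_of_real (1 - \<delta>)) (T (proj f m y)))
           + norm (scaleC (complex_of_real \<eta>1) (lincomb g m (\<lambda>l. cinner (f l) y)))"
      unfolding S0dec by (rule norm_triangle_ineq)
    also have "\<dots> = (1 - \<delta>) * norm (T (proj f m y)) + \<eta>1 * s"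
      by (simp only: norm_scaleC norm_of_real ng) (use d1 \<eta>10 in simp)
    also have "\<dots> \<le> (1 - \<delta>) * (R * s) + \<eta>1 * s"
      using d1 Tb[of "proj f m y"] np by (simp add: mult_left_mono)
    also have "\<dots> = \<rho> * R * s" by (simp add: rh e1 algebra_simps)
    finally show ?thesis by (simp add: s_def)
  qed
  have nS0': "norm (S0 y) \<le> \<rho> * R * norm y" for y
  proof -
    have "sqrt (\<Sum>l<m. (cmod (cinner (f l) y))\<^sup>2) \<le> norm y"
      using bessel[OF onf, of y] by (simp add: real_le_lsqrt)
    moreover have "\<rho> * R \<ge> 0" using d1 R1 by (simp add: rh)
    ultimately show ?thesis using order_trans[OF nS0[of y] mult_left_mono] by blast
  qed
  have S0pow: "norm ((S0 ^^ i) x) \<le> (\<rho> * R) ^ i * a" for i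
  proof (induction i)
    case 0 thus ?case by (simp add: a_def)
  next
    case (Suc i)
    have "norm ((S0 ^^ Suc i) x) \<le> \<rho> * R * norm ((S0 ^^ i) x)" using nS0' by simp
    also have "\<dots> \<le> \<rho> * R * ((\<rho> * R) ^ i * a)"
      using Suc d1 R1 by (intro mult_left_mono) (simp_all add: rh)
    finally show ?case by (simp add: algebra_simps)
  qed

  define K where "K = c * a * R ^ j0"
  have K0: "K > 0" using c0 a0 R1 by (simp add: K_def)
  define w where "w = scaleC (complex_of_real (1 / K)) (z - (S0 ^^ Suc (Suc j0)) x)"
  have nw: "norm w \<le> \<eta>2"
  proof -
    have "norm (z - (S0 ^^ Suc (Suc j0)) x) \<le> norm z + (\<rho> * R) ^ Suc (Suc j0) * a"
      using norm_triangle_ineq4[of z "(S0 ^^ Suc (Suc j0)) x"] S0pow[of "Suc (Suc j0)"] by linarith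
    also have "\<dots> \<le> \<eta>2 * K" using Pj0 by (simp add: K_def algebra_simps)
    finally have "norm (z - (S0 ^^ Suc (Suc j0)) x) \<le> \<eta>2 * K" .
    hence "(1 / K) * norm (z - (S0 ^^ Suc (Suc j0)) x) \<le> (1 / K) * (\<eta>2 * K)"
      using K0 by (intro mult_left_mono) simp_all
    thus ?thesis using K0 by (simp add: w_def norm_scaleC norm_divide)
  qed
  have ew: "cinner (e i) w = 0" if "i < Suc j0" for i
  proof -
    have "(S0 ^^ Suc (Suc j0)) x = S0 ((S0 ^^ Suc j0) x)" by simp
    hence "cinner (e i) ((S0 ^^ Suc (Suc j0)) x) = 0" using eS0[OF that] by simp
    thus ?thesis using that by (simp add: w_def cinner_scaleC_right cinner_diff_right ez)
  qed

  define C1 where "C1 = rop (\<lambda>_. u) (\<lambda>_. scaleC (complex_of_real c) (e 0)) 1"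
  define C2 where "C2 = rop e (\<lambda>i. scaleC (complex_of_real R) (e (Suc i))) j0"
  define C3 where "C3 = rop (\<lambda>_. e j0) (\<lambda>_. w) 1"
  define S where "S y = S0 y + (C1 y + (C2 y + C3 y))" for y
  have C1y: "C1 y = scaleC (cinner u y * complex_of_real c) (e 0)" for y
    unfolding C1_def rop_one by (simp add: scaleC_scaleC)
  have C3y: "C3 y = scaleC (cinner (e j0) y) w" for y
    unfolding C3_def rop_one by simp
  have C2y: "C2 y = (\<Sum>i<j0. scaleC (cinner (e i) y * complex_of_real R) (e (Suc i)))" for y
    by (simp add: C2_def rop_def scaleC_scaleC)
  have Sbcl: "bounded_clinear_op S"
    unfolding S_def[abs_def] S0_def C1_def C2_def C3_def
    by (intro bclin_add rop_bclin)
  from Sbcl have Sadd: "\<And>x y. S (x + y) = S x + S y" and Ssc: "\<And>a x. S (scaleC a x) = scaleC a (S x)"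
    unfolding bounded_clinear_op_def by blast+

  have Sv1: "S v = S0 v + scaleC (cinner u v * complex_of_real c) (e 0)"
    if "\<And>i. i < Suc j0 \<Longrightarrow> cinner (e i) v = 0" for v
  proof -
    have "C2 v = 0" unfolding C2y using that by simp
    moreover have "C3 v = 0" unfolding C3y using that by simp
    ultimately show ?thesis by (simp add: S_def C1y)
  qed
  have SS0: "S (S0 y) = S0 (S0 y)" for y
    using Sv1[of "S0 y"] eS0 uS0 by simp
  have Sx: "S x = S0 x + scaleC (complex_of_real (c * a)) (e 0)"
    using Sv1[of x] ex ux by (simp add: mult.commute)
  have Se: "S (e i) = (if i < j0 then scaleC (complex_of_real R) (e (Suc i)) else w)" if "i \<le> j0" for i
  proof -
    have ee: "cinner (e l) (e i) = (if l = i then 1 else 0)" if "l < Suc j0" for l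
      using one that \<open>i \<le> j0\<close> by (simp add: orthonormal_def)
    have "S0 (e i) = 0"
    proof -
      have "\<And>l. l < m \<Longrightarrow> cinner (f l) (e i) = 0"
      proof -
        fix l assume "l < m"
        have "cinner (e i) (f l) = 0" using ef[of i l] \<open>l < m\<close> \<open>i \<le> j0\<close> by simp
        thus "cinner (f l) (e i) = 0" using cinner_zero_sym by blast
      qed
      thus ?thesis by (simp add: S0lc lincomb_def)
    qed
    moreover have "C1 (e i) = 0" using ue \<open>i \<le> j0\<close> by (simp add: C1y)
    moreover have "C2 (e i) = (if i < j0 then scaleC (complex_of_real R) (e (Suc i)) else 0)"
    proof -
      have "C2 (e i) = (\<Sum>l<j0. if l = i then scaleC (complex_of_real R) (e (Suc i)) else 0)"
        unfolding C2y by (intro sum.cong refl) (simp add: ee)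
      also have "\<dots> = (if i < j0 then scaleC (complex_of_real R) (e (Suc i)) else 0)"
        by simp
      finally show ?thesis .
    qed
    moreover have "C3 (e i) = (if i = j0 then w else 0)"
      using ee[of j0] by (simp add: C3y scaleC_one)
    ultimately show ?thesis using \<open>i \<le> j0\<close> by (simp add: S_def)
  qed
  have orbit: "(S ^^ Suc i) x = (S0 ^^ Suc i) x + scaleC (complex_of_real (c * a * R ^ i)) (e i)"
    if "i \<le> j0" for i
    using that
  proof (induction i)
    case 0 thus ?case by (simp add: Sx)
  next
    case (Suc i)
    hence IH: "(S ^^ Suc i) x = (S0 ^^ Suc i) x + scaleC (complex_of_real (c * a * R ^ i)) (e i)" by simp
    have "(S ^^ Suc (Suc i)) x = S ((S0 ^^ Suc i) x + scaleC (complex_of_real (c * a * R ^ i)) (e i))"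
      using IH by simp
    also have "\<dots> = S ((S0 ^^ Suc i) x) + scaleC (complex_of_real (c * a * R ^ i)) (S (e i))"
      by (simp add: Sadd Ssc)
    also have "S ((S0 ^^ Suc i) x) = (S0 ^^ Suc (Suc i)) x" using SS0 by simp
    also have "S (e i) = scaleC (complex_of_real R) (e (Suc i))" using Se[of i] Suc.prems by simp
    finally show ?case by (simp add: scaleC_scaleC algebra_simps)
  qed
  have Nx: "(S ^^ Suc (Suc j0)) x = z"
  proof -
    have "(S ^^ Suc (Suc j0)) x = S ((S0 ^^ Suc j0) x + scaleC (complex_of_real K) (e j0))"
      using orbit[of j0] by (simp add: K_def)
    also have "\<dots> = S ((S0 ^^ Suc j0) x) + scaleC (complex_of_real K) (S (e j0))"
      by (simp add: Sadd Ssc)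
    also have "S ((S0 ^^ Suc j0) x) = (S0 ^^ Suc (Suc j0)) x" using SS0 by simp
    also have "S (e j0) = w" using Se[of j0] by simp
    also have "scaleC (complex_of_real K) w = z - (S0 ^^ Suc (Suc j0)) x"
      using K0 by (simp add: w_def scaleC_scaleC scaleC_one)
    finally show ?thesis by simp
  qed

  have approx: "norm (S (xs j) - T (xs j)) < \<epsilon>" if "j \<in> {1..n}" for j
  proof -
    define v where "v = xs j"
    have nv: "norm v = 1" using xsn that by (simp add: v_def)
    have pv: "proj f m v = v" using fx[OF that] by (simp add: v_def)
    have ev: "cinner (e i) v = 0" if "i < Suc j0" for i
    proof -
      have "cinner (e i) (proj f m v) = 0" unfolding proj_def
        by (rule orth_lincomb_right) (simp add: ef that)
      thus ?thesis using pv by simp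
    qed
    define G where "G = lincomb g m (\<lambda>l. cinner (f l) v)"
    have nG: "norm G \<le> 1"
    proof -
      have "(norm G)\<^sup>2 \<le> (norm v)\<^sup>2"
        unfolding G_def orthonormal_norm_lincomb[OF ong] by (rule bessel[OF onf])
      hence "(norm G)\<^sup>2 \<le> 1\<^sup>2" using nv by simp
      thus ?thesis by (rule power2_le_imp_le) simp
    qed
    have "S v - T v = scaleC (complex_of_real (1 - \<delta>)) (T v) - T v
        + scaleC (complex_of_real \<eta>1) G + scaleC (cinner u v * complex_of_real c) (e 0)"
      using Sv1[of v] ev S0dec[of v] pv by (simp add: G_def)
    also have "scaleC (complex_of_real (1 - \<delta>)) (T v) - T v = - scaleC (complex_of_real \<delta>) (T v)"
      by (simp add: scaleC_diff_left scaleC_one)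
    finally have dv: "S v - T v = - scaleC (complex_of_real \<delta>) (T v) + scaleC (complex_of_real \<eta>1) G
        + scaleC (cinner u v * complex_of_real c) (e 0)" .
    have n1: "norm (scaleC (complex_of_real \<delta>) (T v)) \<le> \<delta> * R"
      using Tb[of v] nv d0 by (simp add: norm_scaleC)
    have n2: "norm (scaleC (complex_of_real \<eta>1) G) \<le> \<eta>1"
      using nG \<eta>10 by (simp add: norm_scaleC mult_le_cancel_left1)
    have n3: "norm (scaleC (cinner u v * complex_of_real c) (e 0)) \<le> \<eta>2"
    proof -
      have "norm (e 0) = 1" using orthonormal_norm[OF one] by simp
      hence "norm (scaleC (cinner u v * complex_of_real c) (e 0)) = cmod (cinner u v) * c"
        using c0 by (simp add: norm_scaleC norm_mult)
      also have "\<dots> \<le> (norm u * norm v) * c" using c0 by (intro mult_right_mono cauchy_schwarz) simp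
      also have "\<dots> \<le> U * c" using nu nv c0 by (simp add: mult_right_mono)
      finally show ?thesis using cU by (simp add: mult.commute)
    qed
    have "norm (S v - T v) \<le> norm (- scaleC (complex_of_real \<delta>) (T v) + scaleC (complex_of_real \<eta>1) G)
        + norm (scaleC (cinner u v * complex_of_real c) (e 0))"
      unfolding dv by (rule norm_triangle_ineq)
    also have "\<dots> \<le> (norm (- scaleC (complex_of_real \<delta>) (T v)) + norm (scaleC (complex_of_real \<eta>1) G))
        + norm (scaleC (cinner u v * complex_of_real c) (e 0))"
      by (intro add_right_mono norm_triangle_ineq)
    also have "\<dots> \<le> \<delta> * R + \<eta>1 + \<eta>2" using n1 n2 n3 by simp
    also have "\<dots> < \<epsilon>" unfolding e1 e2 using dR ep by linarith
    finally show ?thesis by (simp add: v_def)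
  qed

  have Sbound: "norm (S y) \<le> R * norm y" for y
  proof -
    define bb where "bb i = cinner (e i) y" for i
    define y' where "y' = y - proj e (Suc j0) y"
    define Q where "Q = (norm y')\<^sup>2"
    define B where "B = (\<Sum>i<j0. (cmod (bb i))\<^sup>2)"
    have hb: "(norm y)\<^sup>2 = Q + B + (cmod (bb j0))\<^sup>2"
      using bessel_eq[OF one, of y] by (simp add: Q_def y'_def B_def bb_def)
    have fe: "cinner (f l) (e i) = 0" if "l < m" "i < Suc j0" for l i
      using ef[OF that(2) that(1)] cinner_zero_sym by blast
    have fy: "cinner (f l) y = cinner (f l) y'" if "l < m" for l
    proof -
      have "cinner (f l) (proj e (Suc j0) y) = 0" unfolding proj_def
        by (rule orth_lincomb_right) (simp add: fe that)
      thus ?thesis by (simp add: y'_def cinner_diff_right)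
    qed
    have sf: "(\<Sum>l<m. (cmod (cinner (f l) y))\<^sup>2) \<le> Q"
      using bessel[OF onf, of y'] by (simp add: fy Q_def)
    have uy: "cinner u y = cinner u y'"
    proof -
      have "cinner u (proj e (Suc j0) y) = 0" unfolding proj_def
        by (rule orth_lincomb_right) (simp add: ue)
      thus ?thesis by (simp add: y'_def cinner_diff_right)
    qed
    have Q0: "Q \<ge> 0" by (simp add: Q_def)
    have nyQ: "norm y' = sqrt Q" by (simp add: Q_def)
    have uyb: "cmod (cinner u y * complex_of_real c) \<le> \<eta>2 * sqrt Q"
    proof -
      have "cmod (cinner u y * complex_of_real c) = cmod (cinner u y') * c" using c0 by (simp add: uy norm_mult)
      also have "\<dots> \<le> (norm u * sqrt Q) * c"
        using c0 cauchy_schwarz[of u y'] by (simp add: nyQ mult_right_mono)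
      also have "\<dots> \<le> (U * sqrt Q) * c" using nu c0 Q0 by (intro mult_right_mono) (simp_all add: real_sqrt_ge_zero)
      also have "(U * sqrt Q) * c = \<eta>2 * sqrt Q" by (simp only: cU[symmetric] mult_ac)
      finally show ?thesis .
    qed
    define coef where "coef i = (case i of 0 \<Rightarrow> cinner u y * complex_of_real c | Suc l \<Rightarrow> bb l * complex_of_real R)" for i
    define p1 where "p1 = S0 y + C3 y"
    define p2 where "p2 = lincomb e (Suc j0) coef"
    have p2eq: "p2 = C1 y + C2 y"
      unfolding p2_def lincomb_def C1y C2y
      by (subst sum.lessThan_Suc_shift) (simp add: coef_def bb_def)
    have Sy: "S y = p1 + p2" by (simp add: S_def p1_def p2eq algebra_simps)
    have o: "cinner p1 p2 = 0"
      unfolding p2_def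
    proof (rule orth_lincomb_right)
      fix i assume i: "i < Suc j0"
      have "cinner (S0 y) (e i) = 0" using eS0[OF i] cinner_zero_sym by blast
      moreover have "cinner w (e i) = 0" using ew[OF i] cinner_zero_sym by blast
      ultimately show "cinner p1 (e i) = 0"
        by (simp add: p1_def C3y cinner_add_left cinner_scaleC_left)
    qed
    have np2: "(norm p2)\<^sup>2 = (cmod (cinner u y * complex_of_real c))\<^sup>2 + R\<^sup>2 * B"
    proof -
      have "(norm p2)\<^sup>2 = (\<Sum>i<Suc j0. (cmod (coef i))\<^sup>2)"
        unfolding p2_def by (rule orthonormal_norm_lincomb[OF one])
      also have "\<dots> = (cmod (coef 0))\<^sup>2 + (\<Sum>i<j0. (cmod (coef (Suc i)))\<^sup>2)"
        by (subst sum.lessThan_Suc_shift) simp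
      also have "\<dots> = (cmod (cinner u y * complex_of_real c))\<^sup>2 + R\<^sup>2 * B"
        using R1 by (simp add: coef_def B_def sum_distrib_left norm_mult power_mult_distrib mult.commute)
      finally show ?thesis .
    qed
    have np1: "norm p1 \<le> (1 - \<delta>/2) * R * sqrt Q + \<delta> * R / 4 * cmod (bb j0)"
    proof -
      have "norm (S0 y) \<le> \<rho> * R * sqrt Q"
      proof -
        have "sqrt (\<Sum>l<m. (cmod (cinner (f l) y))\<^sup>2) \<le> sqrt Q" using sf by simp
        moreover have "\<rho> * R \<ge> 0" using d1 R1 by (simp add: rh)
        ultimately show ?thesis using order_trans[OF nS0[of y] mult_left_mono] by blast
      qed
      moreover have "norm (C3 y) \<le> \<eta>2 * cmod (bb j0)"
        using nw by (simp add: C3y bb_def norm_scaleC mult.commute mult_right_mono)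
      ultimately show ?thesis
        using norm_triangle_ineq[of "S0 y" "C3 y"] by (simp add: p1_def rh e2)
    qed
    have X: "(norm (S y))\<^sup>2 \<le> (norm p1)\<^sup>2 + (\<delta> * R / 4)\<^sup>2 * (sqrt Q)\<^sup>2 + R\<^sup>2 * B"
    proof -
      have "(norm (S y))\<^sup>2 = (norm p1)\<^sup>2 + (norm p2)\<^sup>2" unfolding Sy by (rule norm_add_sq_orth[OF o])
      moreover have "(cmod (cinner u y * complex_of_real c))\<^sup>2 \<le> (\<eta>2 * sqrt Q)\<^sup>2"
        using uyb by (simp add: power_mono)
      moreover have "(\<eta>2 * sqrt Q)\<^sup>2 = (\<delta> * R / 4)\<^sup>2 * (sqrt Q)\<^sup>2"
        by (simp only: e2 power_mult_distrib)
      ultimately show ?thesis using np2 by linarith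
    qed
    have "(norm (S y))\<^sup>2 \<le> R\<^sup>2 * ((sqrt Q)\<^sup>2 + B + (cmod (bb j0))\<^sup>2)"
      by (rule final_ineq[OF d0 d1 R1 _ _ _ _ np1 X]) (simp_all add: Q0 B_def sum_nonneg)
    also have "\<dots> = (R * norm y)\<^sup>2" using hb Q0 by (simp add: power_mult_distrib)
    finally show ?thesis by (rule power2_le_imp_le) (use R1 in simp)
  qed

  have onS: "onorm S \<le> R"
    by (rule onorm_bound) (use R1 Sbound in auto)

  have frS: "finite_rank S"
  proof -
    define BB where "BB = t ` {..<m} \<union> (\<lambda>_. scaleC (complex_of_real c) (e 0)) ` {..<1::nat}
       \<union> (\<lambda>i. scaleC (complex_of_real R) (e (Suc i))) ` {..<j0} \<union> (\<lambda>_. w) ` {..<1::nat}"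
    have "finite BB" by (simp add: BB_def)
    moreover have "range S \<subseteq> cspan BB"
    proof
      fix v assume "v \<in> range S"
      then obtain y where v: "v = S y" by blast
      have m0: "cspan (t ` {..<m}) \<subseteq> cspan BB" by (rule cspan_mono) (auto simp: BB_def)
      have m1: "cspan ((\<lambda>_. scaleC (complex_of_real c) (e 0)) ` {..<1::nat}) \<subseteq> cspan BB"
        by (rule cspan_mono) (auto simp: BB_def)
      have m2: "cspan ((\<lambda>i. scaleC (complex_of_real R) (e (Suc i))) ` {..<j0}) \<subseteq> cspan BB"
        by (rule cspan_mono) (auto simp: BB_def)
      have m3: "cspan ((\<lambda>_. w) ` {..<1::nat}) \<subseteq> cspan BB" by (rule cspan_mono) (auto simp: BB_def)
      have h0: "S0 y \<in> cspan BB"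
        using subsetD[OF m0 rop_range[of f t m y]] unfolding S0_def .
      have h1: "C1 y \<in> cspan BB"
        using subsetD[OF m1 rop_range[of "\<lambda>_. u" "\<lambda>_. scaleC (complex_of_real c) (e 0)" 1 y]]
        unfolding C1_def .
      have h2: "C2 y \<in> cspan BB"
        using subsetD[OF m2 rop_range[of e "\<lambda>i. scaleC (complex_of_real R) (e (Suc i))" j0 y]]
        unfolding C2_def .
      have h3: "C3 y \<in> cspan BB"
        using subsetD[OF m3 rop_range[of "\<lambda>_. e j0" "\<lambda>_. w" 1 y]] unfolding C3_def .
      show "v \<in> cspan BB" unfolding v S_def using h0 h1 h2 h3 by (intro cspan_add)
    qed
    ultimately show ?thesis unfolding finite_rank_def by blast
  qed

  show ?thesis
    by (rule exI[of _ S]) (use Sbcl frS onS approx Nx Neq in simp)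
qed

theorem lemma6:
  assumes "separable_space TYPE('a::complex_hilbert_space)"
    and "infinite_dimensional TYPE('a)"
  shows "\<exists>N :: real \<Rightarrow> real \<Rightarrow> real \<Rightarrow> real \<Rightarrow> nat.
    \<forall>(n::nat) (xs::nat \<Rightarrow> 'a) (R::real) (T::'a \<Rightarrow> 'a) (x::'a) (z::'a) (\<epsilon>::real).
      (\<forall>j\<in>{1..n}. norm (xs j) = 1) \<and> R > 1 \<and> bounded_clinear_op T \<and> onorm T \<le> R \<and>
      x \<noteq> 0 \<and> \<epsilon> > 0 \<longrightarrow>
      (\<exists>S::'a \<Rightarrow> 'a. bounded_clinear_op S \<and> finite_rank S \<and> onorm S \<le> R \<and>
         (\<forall>j\<in>{1..n}. norm (S (xs j) - T (xs j)) < \<epsilon>) \<and>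
         (S ^^ N R \<epsilon> (norm x) (norm z)) x = z)"
    by (intro exI[of _ Nfun] allI impI, elim conjE) (rule main_construction[OF assms(2)]; assumption)

end
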